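(* Let $p_1,p_2\ge3$, and let $J(x,y)$, $J_0$ and $C$ be the $p_1p_2\times p_1p_2$ matrices described in the context, and put $J_1(x,y)=J(x,y)-J_0$. Then for every $(x,y)\in[0,2\pi]^2$, $$-C\le J_1(x,y)\le C,$$ where for Hermitian matrices $A\le B$ means that $B-A$ is positive semidefinite.
   Context: Let $a^0,a^1,b^0,b^1:\mathbb{Z}^2\to\mathbb{C}$, $(n,m)\mapsto a^j_{nm},b^j_{nm}$, be $(p_1,p_2)$-periodic with $b^1_{nm}\in\mathbb{R}$. For $x\in[0,2\pi]$ and $n\in\mathbb{Z}$, $\hat A_n(x)$ is the $p_2\times p_2$ matrix with $(\hat A_n)_{mm}=a^1_{nm}$, $(\hat A_n)_{m+1,m}=a^0_{nm}$, $(\hat A_n)_{m,m+1}=\overline{a^0_{nm}}$ ($1\le m\le p_2-1$), $(\hat A_n)_{1,p_2}=e^{ix}a^0_{np_2}$, $(\hat A_n)_{p_2,1}=e^{-ix}\overline{a^0_{np_2}}$, other entries $0$; $\hat B_n(x)$ is defined the same way from $b^1,b^0$. $\hat A^0_n,\hat B^0_n$ denote $\hat A_n,\hat B_n$ with the corner entries $(1,p_2),(p_2,1)$ set to $0$. $J(x,y)$ is the $p_1\times p_1$ block matrix ($p_2\times p_2$ blocks) with diagonal blocks $\hat B_n(x)$, block $(n+1,n)=\hat A_n(x)$, block $(n,n+1)=\hat A_n(x)^*$ ($1\le n\le p_1-1$), block $(1,p_1)=e^{iy}\hat A_{p_1}(x)$, block $(p_1,1)=e^{-iy}\hat A_{p_1}(x)^*$,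 other blocks zero. $J_0$ is the block matrix with diagonal blocks $\hat B^0_n$, block $(n+1,n)=\hat A^0_n$, block $(n,n+1)=(\hat A^0_n)^*$ ($1\le n\le p_1-1$), other blocks zero. $C=\mathrm{diag}(C_1,\dots,C_{p_1})$ (block diagonal), with $C_n=\mathrm{diag}(c_n,0,\dots,0,c_n)$, $c_n=|b^0_{np_2}|+|a^0_{np_2}|+|a^0_{n-1,p_2}|$ for $2\le n\le p_1-1$; $C_1=\mathrm{diag}(e_1,0,\dots,0,e_1)+D$ with $e_1=|b^0_{1p_2}|+|a^0_{1p_2}|$; $C_{p_1}=\mathrm{diag}(e_{p_1},0,\dots,0,e_{p_1})+D$ with $e_{p_1}=|b^0_{p_1p_2}|+|a^0_{p_1-1,p_2}|$; $D=\mathrm{diag}(d_1,\dots,d_{p_2})$, $d_m=|a^1_{p_1m}|+|a^0_{p_1m}|+|a^0_{p_1,m-1}|$ with $a^0_{p_1,0}:=a^0_{p_1,p_2}$. *)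

theory Defs
  imports Complex_Main
begin

text \<open>Matrices of size p1 p2 x p1 p2 are represented as functions on pairs of
  block-indices (n,m), 1 \<le> n \<le> p1 (block), 1 \<le> m \<le> p2 (entry within block).
  The p2 x p2 blocks are functions nat \<Rightarrow> nat \<Rightarrow> complex, 1-based.\<close>

type_synonym bmat = "nat \<times> nat \<Rightarrow> nat \<times> nat \<Rightarrow> complex"

definition idx :: "nat \<Rightarrow> nat \<Rightarrow> (nat \<times> nat) set" where
  "idx p1 p2 = {1..p1} \<times> {1..p2}"

definition periodic2 :: "nat \<Rightarrow> nat \<Rightarrow> (int \<Rightarrow> int \<Rightarrow> 'a) \<Rightarrow> bool" where
  "periodic2 p1 p2 f \<longleftrightarrow> (\<forall>n m. f (n + int p1) m = f n m \<and> f n (m + int p2) = f n m)"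

definition hatM :: "(int \<Rightarrow> int \<Rightarrow> complex) \<Rightarrow> (int \<Rightarrow> int \<Rightarrow> complex) \<Rightarrow> nat \<Rightarrow> real
     \<Rightarrow> nat \<Rightarrow> nat \<Rightarrow> nat \<Rightarrow> complex" where
  "hatM d od p2 x n i j =
     (if i = j then d (int n) (int i)
      else if i = j + 1 \<and> 1 \<le> j \<and> j \<le> p2 - 1 then od (int n) (int j)
      else if j = i + 1 \<and> 1 \<le> i \<and> i \<le> p2 - 1 then cnj (od (int n) (int i))
      else if i = 1 \<and> j = p2 then exp (\<i> * complex_of_real x) * od (int n) (int p2)
      else if i = p2 \<and> j = 1 then exp (- \<i> * complex_of_real x) * cnj (od (int n) (int p2))
      else 0)"

definition hatM0 :: "(int \<Rightarrow> int \<Rightarrow> complex) \<Rightarrow> (int \<Rightarrow> int \<Rightarrow> complex) \<Rightarrow> nat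
     \<Rightarrow> nat \<Rightarrow> nat \<Rightarrow> nat \<Rightarrow> complex" where
  "hatM0 d od p2 n i j =
     (if i = j then d (int n) (int i)
      else if i = j + 1 \<and> 1 \<le> j \<and> j \<le> p2 - 1 then od (int n) (int j)
      else if j = i + 1 \<and> 1 \<le> i \<and> i \<le> p2 - 1 then cnj (od (int n) (int i))
      else 0)"

text \<open>J(x,y): diagonal blocks hat B_n, block (n+1,n) = hat A_n, block (n,n+1) = hat A_n^*,
  block (1,p1) = e^{iy} hat A_{p1}, block (p1,1) = e^{-iy} hat A_{p1}^*.\<close>
definition Jmat :: "(int \<Rightarrow> int \<Rightarrow> complex) \<Rightarrow> (int \<Rightarrow> int \<Rightarrow> complex) \<Rightarrow>
    (int \<Rightarrow> int \<Rightarrow> complex) \<Rightarrow> (int \<Rightarrow> int \<Rightarrow> complex) \<Rightarrow> nat \<Rightarrow> nat \<Rightarrow> real \<Rightarrow> real \<Rightarrow> bmat" where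
  "Jmat a0 a1 b0 b1 p1 p2 x y = (\<lambda>(n,m) (n',m').
     if n = n' then hatM b1 b0 p2 x n m m'
     else if n = n' + 1 \<and> 1 \<le> n' \<and> n' \<le> p1 - 1 then hatM a1 a0 p2 x n' m m'
     else if n' = n + 1 \<and> 1 \<le> n \<and> n \<le> p1 - 1 then cnj (hatM a1 a0 p2 x n m' m)
     else if n = 1 \<and> n' = p1 then exp (\<i> * complex_of_real y) * hatM a1 a0 p2 x p1 m m'
     else if n = p1 \<and> n' = 1 then exp (- \<i> * complex_of_real y) * cnj (hatM a1 a0 p2 x p1 m' m)
     else 0)"

definition J0mat :: "(int \<Rightarrow> int \<Rightarrow> complex) \<Rightarrow> (int \<Rightarrow> int \<Rightarrow> complex) \<Rightarrow>
    (int \<Rightarrow> int \<Rightarrow> complex) \<Rightarrow> (int \<Rightarrow> int \<Rightarrow> complex) \<Rightarrow> nat \<Rightarrow> nat \<Rightarrow> bmat" where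
  "J0mat a0 a1 b0 b1 p1 p2 = (\<lambda>(n,m) (n',m').
     if n = n' then hatM0 b1 b0 p2 n m m'
     else if n = n' + 1 \<and> 1 \<le> n' \<and> n' \<le> p1 - 1 then hatM0 a1 a0 p2 n' m m'
     else if n' = n + 1 \<and> 1 \<le> n \<and> n \<le> p1 - 1 then cnj (hatM0 a1 a0 p2 n m' m)
     else 0)"

definition cdiag :: "(int \<Rightarrow> int \<Rightarrow> complex) \<Rightarrow> (int \<Rightarrow> int \<Rightarrow> complex) \<Rightarrow>
    (int \<Rightarrow> int \<Rightarrow> complex) \<Rightarrow> nat \<Rightarrow> nat \<Rightarrow> nat \<Rightarrow> nat \<Rightarrow> real" where
  "cdiag a0 a1 b0 p1 p2 n m =
     (let P1 = int p1; P2 = int p2; N = int n; M = int m;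
          cn = (if n = 1 then cmod (b0 1 P2) + cmod (a0 1 P2)
                else if n = p1 then cmod (b0 P1 P2) + cmod (a0 (P1 - 1) P2)
                else cmod (b0 N P2) + cmod (a0 N P2) + cmod (a0 (N - 1) P2));
          dm = cmod (a1 P1 M) + cmod (a0 P1 M)
               + cmod (if m = 1 then a0 P1 P2 else a0 P1 (M - 1))
      in (if m = 1 \<or> m = p2 then cn else 0) + (if n = 1 \<or> n = p1 then dm else 0))"

definition Cmat :: "(int \<Rightarrow> int \<Rightarrow> complex) \<Rightarrow> (int \<Rightarrow> int \<Rightarrow> complex) \<Rightarrow>
    (int \<Rightarrow> int \<Rightarrow> complex) \<Rightarrow> nat \<Rightarrow> nat \<Rightarrow> bmat" where
  "Cmat a0 a1 b0 p1 p2 = (\<lambda>(n,m) (n',m').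
     if n = n' \<and> m = m' then complex_of_real (cdiag a0 a1 b0 p1 p2 n m) else 0)"

definition hermitian_on :: "'i set \<Rightarrow> ('i \<Rightarrow> 'i \<Rightarrow> complex) \<Rightarrow> bool" where
  "hermitian_on I M \<longleftrightarrow> (\<forall>i\<in>I. \<forall>j\<in>I. M i j = cnj (M j i))"

definition psd_on :: "'i set \<Rightarrow> ('i \<Rightarrow> 'i \<Rightarrow> complex) \<Rightarrow> bool" where
  "psd_on I M \<longleftrightarrow> hermitian_on I M \<and>
     (\<forall>v :: 'i \<Rightarrow> complex. 0 \<le> Re (\<Sum>i\<in>I. \<Sum>j\<in>I. cnj (v i) * M i j * v j))"

definition loewner_le :: "'i set \<Rightarrow> ('i \<Rightarrow> 'i \<Rightarrow> complex) \<Rightarrow> ('i \<Rightarrow> 'i \<Rightarrow> complex) \<Rightarrow> bool" where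
  "loewner_le I A B \<longleftrightarrow> psd_on I (\<lambda>i j. B i j - A i j)"

end

theory Submission
  imports Defs
begin

lemma cnj_mult_self: "cnj z * z = complex_of_real ((cmod z)^2)"
  by (metis complex_norm_square mult.commute of_real_power)

lemma psd_diag_dom:
  fixes I :: "'i set" and H :: "'i \<Rightarrow> 'i \<Rightarrow> complex" and c :: "'i \<Rightarrow> real"
  assumes fin: "finite I" and herm: "hermitian_on I H"
    and rows: "\<forall>i\<in>I. (\<Sum>j\<in>I. cmod (H i j)) \<le> c i"
  shows "psd_on I (\<lambda>i j. (if i = j then complex_of_real (c i) else 0) + H i j)"
  unfolding psd_on_def
proof (intro conjI allI)
  show "hermitian_on I (\<lambda>i j. (if i = j then complex_of_real (c i) else 0) + H i j)"
    unfolding hermitian_on_def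
  proof (intro ballI)
    fix i j assume ij: "i \<in> I" "j \<in> I"
    then have h: "H i j = cnj (H j i)" using herm unfolding hermitian_on_def by blast
    show "(if i = j then complex_of_real (c i) else 0) + H i j = cnj ((if j = i then complex_of_real (c j) else 0) + H j i)"
      using h by (cases "i = j") simp_all
  qed
next
  fix v :: "'i \<Rightarrow> complex"
  let ?a = "\<lambda>i. cmod (v i)"
  have split: "(\<Sum>i\<in>I. \<Sum>j\<in>I. cnj (v i) * ((if i = j then complex_of_real (c i) else 0) + H i j) * v j)
      = (\<Sum>i\<in>I. complex_of_real (c i * (?a i)^2)) + (\<Sum>i\<in>I. \<Sum>j\<in>I. cnj (v i) * H i j * v j)"
  proof -
    have "\<And>i. i \<in> I \<Longrightarrow> (\<Sum>j\<in>I. cnj (v i) * ((if i = j then complex_of_real (c i) else 0) + H i j) * v j)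
        = complex_of_real (c i * (?a i)^2) + (\<Sum>j\<in>I. cnj (v i) * H i j * v j)"
    proof -
      fix i assume i: "i \<in> I"
      have "(\<Sum>j\<in>I. cnj (v i) * ((if i = j then complex_of_real (c i) else 0) + H i j) * v j)
          = (\<Sum>j\<in>I. (if i = j then cnj (v i) * complex_of_real (c i) * v j else 0)) + (\<Sum>j\<in>I. cnj (v i) * H i j * v j)"
        unfolding sum.distrib[symmetric] by (rule sum.cong) (auto simp: algebra_simps)
      also have "(\<Sum>j\<in>I. (if i = j then cnj (v i) * complex_of_real (c i) * v j else 0)) = cnj (v i) * complex_of_real (c i) * v i"
        using fin i by simp
      also have "\<dots> = complex_of_real (c i * (?a i)^2)"
        using cnj_mult_self[of "v i"] by (simp add: algebra_simps)
      finally show "?thesis i" .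
    qed
    then show ?thesis by (simp add: sum.distrib)
  qed
  have bound: "cmod (\<Sum>i\<in>I. \<Sum>j\<in>I. cnj (v i) * H i j * v j) \<le> (\<Sum>i\<in>I. c i * (?a i)^2)"
  proof -
    have "cmod (\<Sum>i\<in>I. \<Sum>j\<in>I. cnj (v i) * H i j * v j) \<le> (\<Sum>i\<in>I. \<Sum>j\<in>I. cmod (cnj (v i) * H i j * v j))"
      by (rule order_trans[OF norm_sum sum_mono[OF norm_sum]])
    also have "\<dots> \<le> (\<Sum>i\<in>I. \<Sum>j\<in>I. cmod (H i j) * ((?a i)^2 + (?a j)^2) / 2)"
    proof (intro sum_mono)
      fix i j
      have "?a i * ?a j \<le> ((?a i)^2 + (?a j)^2) / 2"
        using sum_squares_bound[of "?a i" "?a j"] by (simp add: field_simps power2_eq_square)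
      then have "cmod (H i j) * (?a i * ?a j) \<le> cmod (H i j) * (((?a i)^2 + (?a j)^2) / 2)"
        by (rule mult_left_mono) simp
      then show "cmod (cnj (v i) * H i j * v j) \<le> cmod (H i j) * ((?a i)^2 + (?a j)^2) / 2"
        by (simp add: norm_mult algebra_simps)
    qed
    also have "\<dots> = ((\<Sum>i\<in>I. \<Sum>j\<in>I. cmod (H i j) * (?a i)^2) + (\<Sum>i\<in>I. \<Sum>j\<in>I. cmod (H i j) * (?a j)^2)) / 2"
      by (simp add: sum.distrib sum_divide_distrib distrib_left add_divide_distrib)
    also have "(\<Sum>i\<in>I. \<Sum>j\<in>I. cmod (H i j) * (?a j)^2) = (\<Sum>j\<in>I. \<Sum>i\<in>I. cmod (H j i) * (?a j)^2)"
    proof -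
      have "(\<Sum>i\<in>I. \<Sum>j\<in>I. cmod (H i j) * (?a j)^2) = (\<Sum>j\<in>I. \<Sum>i\<in>I. cmod (H i j) * (?a j)^2)"
        by (rule sum.swap)
      also have "\<dots> = (\<Sum>j\<in>I. \<Sum>i\<in>I. cmod (H j i) * (?a j)^2)"
      proof (rule sum.cong[OF refl], rule sum.cong[OF refl])
        fix j i assume "j \<in> I" "i \<in> I"
        then have "H i j = cnj (H j i)" using herm unfolding hermitian_on_def by blast
        then show "cmod (H i j) * (?a j)^2 = cmod (H j i) * (?a j)^2" by simp
      qed
      finally show ?thesis .
    qed
    also have "((\<Sum>i\<in>I. \<Sum>j\<in>I. cmod (H i j) * (?a i)^2) + (\<Sum>j\<in>I. \<Sum>i\<in>I. cmod (H j i) * (?a j)^2)) / 2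
        = (\<Sum>i\<in>I. (\<Sum>j\<in>I. cmod (H i j)) * (?a i)^2)"
      by (simp add: sum_distrib_right)
    also have "\<dots> \<le> (\<Sum>i\<in>I. c i * (?a i)^2)"
      using rows by (intro sum_mono mult_right_mono) auto
    finally show ?thesis .
  qed
  have "Re (\<Sum>i\<in>I. complex_of_real (c i * (?a i)^2)) = (\<Sum>i\<in>I. c i * (?a i)^2)"
    by simp
  moreover have "- cmod (\<Sum>i\<in>I. \<Sum>j\<in>I. cnj (v i) * H i j * v j) \<le> Re (\<Sum>i\<in>I. \<Sum>j\<in>I. cnj (v i) * H i j * v j)"
    using abs_Re_le_cmod[of "\<Sum>i\<in>I. \<Sum>j\<in>I. cnj (v i) * H i j * v j"] by linarith
  ultimately show "0 \<le> Re (\<Sum>i\<in>I. \<Sum>j\<in>I. cnj (v i) * ((if i = j then complex_of_real (c i) else 0) + H i j) * v j)"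
    unfolding split using bound by simp
qed

lemma cmod_exp_i: "cmod (exp (\<i> * complex_of_real x)) = 1"
  by simp
lemma cmod_exp_mi: "cmod (exp (- \<i> * complex_of_real x)) = 1"
  by simp
lemma exp_cnj': "cnj (exp z) = exp (cnj z)"
  by (simp add: cis_cnj exp_eq_polar)

lemma hatM_diff:
  assumes "p2 \<ge> 3"
  shows "hatM d od p2 x n i j - hatM0 d od p2 n i j =
    (if i = 1 \<and> j = p2 then exp (\<i> * complex_of_real x) * od (int n) (int p2)
     else if i = p2 \<and> j = 1 then exp (- \<i> * complex_of_real x) * cnj (od (int n) (int p2)) else 0)"
  using assms by (simp add: hatM_def hatM0_def)

definition ms :: "nat \<Rightarrow> nat \<Rightarrow> nat" where "ms p2 m = (if m = 1 then p2 else 1)"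
definition sc :: "nat \<Rightarrow> nat \<Rightarrow> nat" where "sc p2 m = (if m = p2 then 1 else m + 1)"
definition pc :: "nat \<Rightarrow> nat \<Rightarrow> nat" where "pc p2 m = (if m = 1 then p2 else m - 1)"

lemma hatM_diff_bound:
  assumes "p2 \<ge> 3"
  shows "cmod (hatM d od p2 x n i j - hatM0 d od p2 n i j) \<le>
    (if (i = 1 \<or> i = p2) \<and> j = ms p2 i then cmod (od (int n) (int p2)) else 0)"
  using assms unfolding hatM_diff[OF assms] ms_def
  by (auto simp: norm_mult cmod_exp_i cmod_exp_mi)

lemma hatM_diff_bound_t:
  assumes "p2 \<ge> 3"
  shows "cmod (cnj (hatM d od p2 x n j i) - cnj (hatM0 d od p2 n j i)) \<le>
    (if (i = 1 \<or> i = p2) \<and> j = ms p2 i then cmod (od (int n) (int p2)) else 0)"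
proof -
  have "cmod (cnj (hatM d od p2 x n j i) - cnj (hatM0 d od p2 n j i)) = cmod (hatM d od p2 x n j i - hatM0 d od p2 n j i)"
    by (metis complex_cnj_diff complex_mod_cnj)
  also have "\<dots> \<le> (if (j = 1 \<or> j = p2) \<and> i = ms p2 j then cmod (od (int n) (int p2)) else 0)"
    by (rule hatM_diff_bound[OF assms])
  also have "\<dots> = (if (i = 1 \<or> i = p2) \<and> j = ms p2 i then cmod (od (int n) (int p2)) else 0)"
    using assms by (auto simp: ms_def)
  finally show ?thesis .
qed

definition rowb :: "(int \<Rightarrow> int \<Rightarrow> complex) \<Rightarrow> (int \<Rightarrow> int \<Rightarrow> complex) \<Rightarrow> nat \<Rightarrow> nat \<Rightarrow> nat \<Rightarrow> nat \<Rightarrow> real" where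
  "rowb d od p2 n i j =
     (if j = i then cmod (d (int n) (int i)) else 0)
   + (if j = sc p2 i then cmod (od (int n) (int i)) else 0)
   + (if j = pc p2 i then cmod (if i = 1 then od (int n) (int p2) else od (int n) (int (i - 1))) else 0)"


lemma hb0: assumes "p2 \<ge> 3" "i \<in> {1..p2}" "j \<in> {1..p2}" "j = i"
  shows "cmod (hatM d od p2 x n i j) \<le> rowb d od p2 n i j"
  using assms unfolding hatM_def rowb_def sc_def pc_def by (auto simp: norm_mult)

lemma hb1: assumes "p2 \<ge> 3" "i \<in> {1..p2}" "j \<in> {1..p2}" "j \<noteq> i" "i = j + 1"
  shows "cmod (hatM d od p2 x n i j) \<le> rowb d od p2 n i j"
  using assms unfolding hatM_def rowb_def sc_def pc_def by (auto simp: norm_mult)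

lemma hb2: assumes "p2 \<ge> 3" "i \<in> {1..p2}" "j \<in> {1..p2}" "j \<noteq> i" "i \<noteq> j + 1" "j = i + 1"
  shows "cmod (hatM d od p2 x n i j) \<le> rowb d od p2 n i j"
  using assms unfolding hatM_def rowb_def sc_def pc_def by (auto simp: norm_mult)

lemma hb3: assumes "p2 \<ge> 3" "i \<in> {1..p2}" "j \<in> {1..p2}" "j \<noteq> i" "i \<noteq> j + 1" "j \<noteq> i + 1" "i = 1 \<and> j = p2"
  shows "cmod (hatM d od p2 x n i j) \<le> rowb d od p2 n i j"
  using assms unfolding hatM_def rowb_def sc_def pc_def by (auto simp: norm_mult)

lemma hb4: assumes "p2 \<ge> 3" "i \<in> {1..p2}" "j \<in> {1..p2}" "j \<noteq> i" "i \<noteq> j + 1" "j \<noteq> i + 1" "\<not>(i = 1 \<and> j = p2)" "i = p2 \<and> j = 1"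
  shows "cmod (hatM d od p2 x n i j) \<le> rowb d od p2 n i j"
  using assms unfolding hatM_def rowb_def sc_def pc_def by (auto simp: norm_mult)

lemma hb5: assumes "p2 \<ge> 3" "i \<in> {1..p2}" "j \<in> {1..p2}" "j \<noteq> i" "i \<noteq> j + 1" "j \<noteq> i + 1" "\<not>(i = 1 \<and> j = p2)" "\<not>(i = p2 \<and> j = 1)"
  shows "cmod (hatM d od p2 x n i j) \<le> rowb d od p2 n i j"
  using assms unfolding hatM_def rowb_def sc_def pc_def by (auto simp: norm_mult)

lemma hatM_bound:
  assumes "p2 \<ge> 3" "i \<in> {1..p2}" "j \<in> {1..p2}"
  shows "cmod (hatM d od p2 x n i j) \<le> rowb d od p2 n i j"
proof (cases "j = i")
  case True show ?thesis by (rule hb0[OF assms]; insert assms  True; auto)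
next
  case F0: False
  show ?thesis
  proof (cases "i = j + 1")
  case True show ?thesis by (rule hb1[OF assms]; insert assms F0 True; auto)
next
  case F1: False
  show ?thesis
  proof (cases "j = i + 1")
  case True show ?thesis by (rule hb2[OF assms]; insert assms F0 F1 True; auto)
next
  case F2: False
  show ?thesis
  proof (cases "i = 1 \<and> j = p2")
  case True show ?thesis by (rule hb3[OF assms]; insert assms F0 F1 F2 True; auto)
next
  case F3: False
  show ?thesis
  proof (cases "i = p2 \<and> j = 1")
  case True show ?thesis by (rule hb4[OF assms]; insert assms F0 F1 F2 F3 True; auto)
next
  case F4: False
  show ?thesis
  by (rule hb5[OF assms]; insert assms F0 F1 F2 F3 F4; auto)
qed
qed
qed
qed
qed

lemma hb_t0: assumes "p2 \<ge> 3" "i \<in> {1..p2}" "j \<in> {1..p2}" "i = j"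
  shows "cmod (hatM d od p2 x n j i) \<le> rowb d od p2 n i j"
  using assms unfolding hatM_def rowb_def sc_def pc_def by (auto simp: norm_mult)

lemma hb_t1: assumes "p2 \<ge> 3" "i \<in> {1..p2}" "j \<in> {1..p2}" "i \<noteq> j" "j = i + 1"
  shows "cmod (hatM d od p2 x n j i) \<le> rowb d od p2 n i j"
  using assms unfolding hatM_def rowb_def sc_def pc_def by (auto simp: norm_mult)

lemma hb_t2: assumes "p2 \<ge> 3" "i \<in> {1..p2}" "j \<in> {1..p2}" "i \<noteq> j" "j \<noteq> i + 1" "i = j + 1"
  shows "cmod (hatM d od p2 x n j i) \<le> rowb d od p2 n i j"
  using assms unfolding hatM_def rowb_def sc_def pc_def by (auto simp: norm_mult)

lemma hb_t3: assumes "p2 \<ge> 3" "i \<in> {1..p2}" "j \<in> {1..p2}" "i \<noteq> j" "j \<noteq> i + 1" "i \<noteq> j + 1" "j = 1 \<and> i = p2"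
  shows "cmod (hatM d od p2 x n j i) \<le> rowb d od p2 n i j"
  using assms unfolding hatM_def rowb_def sc_def pc_def by (simp add: norm_mult)

lemma hb_t4c: assumes "p2 \<ge> 3"
  shows "cmod (hatM d od p2 x n p2 1) \<le> rowb d od p2 n 1 p2"
  using assms unfolding hatM_def rowb_def sc_def pc_def by (simp add: norm_mult)

lemma hb_t4: assumes "p2 \<ge> 3" "i \<in> {1..p2}" "j \<in> {1..p2}" "i \<noteq> j" "j \<noteq> i + 1" "i \<noteq> j + 1" "\<not>(j = 1 \<and> i = p2)" "j = p2 \<and> i = 1"
  shows "cmod (hatM d od p2 x n j i) \<le> rowb d od p2 n i j"
proof -
  from assms have "j = p2" "i = 1" by auto
  then show ?thesis using hb_t4c[OF assms(1)] by simp
qed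

lemma hb_t5: assumes "p2 \<ge> 3" "i \<in> {1..p2}" "j \<in> {1..p2}" "i \<noteq> j" "j \<noteq> i + 1" "i \<noteq> j + 1" "\<not>(j = 1 \<and> i = p2)" "\<not>(j = p2 \<and> i = 1)"
  shows "cmod (hatM d od p2 x n j i) \<le> rowb d od p2 n i j"
proof -
  have "hatM d od p2 x n j i = 0" using assms unfolding hatM_def by auto
  moreover have "rowb d od p2 n i j \<ge> 0" unfolding rowb_def by simp
  ultimately show ?thesis by simp
qed

lemma hatM_bound_t:
  assumes "p2 \<ge> 3" "i \<in> {1..p2}" "j \<in> {1..p2}"
  shows "cmod (hatM d od p2 x n j i) \<le> rowb d od p2 n i j"
proof (cases "i = j")
  case True show ?thesis by (rule hb_t0[OF assms]; insert assms  True; auto)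
next
  case F0: False
  show ?thesis
  proof (cases "j = i + 1")
  case True show ?thesis by (rule hb_t1[OF assms]; insert assms F0 True; auto)
next
  case F1: False
  show ?thesis
  proof (cases "i = j + 1")
  case True show ?thesis by (rule hb_t2[OF assms]; insert assms F0 F1 True; auto)
next
  case F2: False
  show ?thesis
  proof (cases "j = 1 \<and> i = p2")
  case True show ?thesis by (rule hb_t3[OF assms]; insert assms F0 F1 F2 True; auto)
next
  case F3: False
  show ?thesis
  proof (cases "j = p2 \<and> i = 1")
  case True show ?thesis by (rule hb_t4[OF assms]; insert assms F0 F1 F2 F3 True; auto)
next
  case F4: False
  show ?thesis
  by (rule hb_t5[OF assms]; insert assms F0 F1 F2 F3 F4; auto)
qed
qed
qed
qed
qed

lemma hhhatM0: assumes "p2 \<ge> 3" "\<forall>n m. d n m \<in> \<real>" "j = i"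
  shows "hatM d od p2 x n i j = cnj (hatM d od p2 x n j i)"
  using assms unfolding hatM_def by (auto simp: Reals_cnj_iff exp_cnj')

lemma hhhatM1: assumes "p2 \<ge> 3" "\<forall>n m. d n m \<in> \<real>" "j \<noteq> i" "i = j + 1"
  shows "hatM d od p2 x n i j = cnj (hatM d od p2 x n j i)"
  using assms unfolding hatM_def by (auto simp: Reals_cnj_iff exp_cnj')

lemma hhhatM2: assumes "p2 \<ge> 3" "\<forall>n m. d n m \<in> \<real>" "j \<noteq> i" "i \<noteq> j + 1" "j = i + 1"
  shows "hatM d od p2 x n i j = cnj (hatM d od p2 x n j i)"
  using assms unfolding hatM_def by (auto simp: Reals_cnj_iff exp_cnj')

lemma hhhatM3: assumes "p2 \<ge> 3" "\<forall>n m. d n m \<in> \<real>" "j \<noteq> i" "i \<noteq> j + 1" "j \<noteq> i + 1" "i = 1 \<and> j = p2"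
  shows "hatM d od p2 x n i j = cnj (hatM d od p2 x n j i)"
  using assms unfolding hatM_def by (auto simp: Reals_cnj_iff exp_cnj')

lemma hhhatM4: assumes "p2 \<ge> 3" "\<forall>n m. d n m \<in> \<real>" "j \<noteq> i" "i \<noteq> j + 1" "j \<noteq> i + 1" "\<not>(i = 1 \<and> j = p2)" "i = p2 \<and> j = 1"
  shows "hatM d od p2 x n i j = cnj (hatM d od p2 x n j i)"
  using assms unfolding hatM_def by (auto simp: Reals_cnj_iff exp_cnj')

lemma hhhatM5: assumes "p2 \<ge> 3" "\<forall>n m. d n m \<in> \<real>" "j \<noteq> i" "i \<noteq> j + 1" "j \<noteq> i + 1" "\<not>(i = 1 \<and> j = p2)" "\<not>(i = p2 \<and> j = 1)"
  shows "hatM d od p2 x n i j = cnj (hatM d od p2 x n j i)"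
  using assms unfolding hatM_def by (auto simp: Reals_cnj_iff exp_cnj')

lemma hatM_herm:
  assumes "p2 \<ge> 3" "\<forall>n m. d n m \<in> \<real>"
  shows "hatM d od p2 x n i j = cnj (hatM d od p2 x n j i)"
proof (cases "j = i")
  case True show ?thesis by (rule hhhatM0[OF assms]; insert assms  True; auto)
next
  case F0: False
  show ?thesis
  proof (cases "i = j + 1")
  case True show ?thesis by (rule hhhatM1[OF assms]; insert assms F0 True; auto)
next
  case F1: False
  show ?thesis
  proof (cases "j = i + 1")
  case True show ?thesis by (rule hhhatM2[OF assms]; insert assms F0 F1 True; auto)
next
  case F2: False
  show ?thesis
  proof (cases "i = 1 \<and> j = p2")
  case True show ?thesis by (rule hhhatM3[OF assms]; insert assms F0 F1 F2 True; auto)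
next
  case F3: False
  show ?thesis
  proof (cases "i = p2 \<and> j = 1")
  case True show ?thesis by (rule hhhatM4[OF assms]; insert assms F0 F1 F2 F3 True; auto)
next
  case F4: False
  show ?thesis
  by (rule hhhatM5[OF assms]; insert assms F0 F1 F2 F3 F4; auto)
qed
qed
qed
qed
qed

lemma hhhatM00: assumes "p2 \<ge> 3" "\<forall>n m. d n m \<in> \<real>" "j = i"
  shows "hatM0 d od p2 n i j = cnj (hatM0 d od p2 n j i)"
  using assms unfolding hatM0_def by (auto simp: Reals_cnj_iff exp_cnj')

lemma hhhatM01: assumes "p2 \<ge> 3" "\<forall>n m. d n m \<in> \<real>" "j \<noteq> i" "i = j + 1"
  shows "hatM0 d od p2 n i j = cnj (hatM0 d od p2 n j i)"
  using assms unfolding hatM0_def by (auto simp: Reals_cnj_iff exp_cnj')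

lemma hhhatM02: assumes "p2 \<ge> 3" "\<forall>n m. d n m \<in> \<real>" "j \<noteq> i" "i \<noteq> j + 1" "j = i + 1"
  shows "hatM0 d od p2 n i j = cnj (hatM0 d od p2 n j i)"
  using assms unfolding hatM0_def by (auto simp: Reals_cnj_iff exp_cnj')

lemma hhhatM03: assumes "p2 \<ge> 3" "\<forall>n m. d n m \<in> \<real>" "j \<noteq> i" "i \<noteq> j + 1" "j \<noteq> i + 1" "i = 1 \<and> j = p2"
  shows "hatM0 d od p2 n i j = cnj (hatM0 d od p2 n j i)"
  using assms unfolding hatM0_def by (auto simp: Reals_cnj_iff exp_cnj')

lemma hhhatM04: assumes "p2 \<ge> 3" "\<forall>n m. d n m \<in> \<real>" "j \<noteq> i" "i \<noteq> j + 1" "j \<noteq> i + 1" "\<not>(i = 1 \<and> j = p2)" "i = p2 \<and> j = 1"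
  shows "hatM0 d od p2 n i j = cnj (hatM0 d od p2 n j i)"
  using assms unfolding hatM0_def by (auto simp: Reals_cnj_iff exp_cnj')

lemma hhhatM05: assumes "p2 \<ge> 3" "\<forall>n m. d n m \<in> \<real>" "j \<noteq> i" "i \<noteq> j + 1" "j \<noteq> i + 1" "\<not>(i = 1 \<and> j = p2)" "\<not>(i = p2 \<and> j = 1)"
  shows "hatM0 d od p2 n i j = cnj (hatM0 d od p2 n j i)"
  using assms unfolding hatM0_def by (auto simp: Reals_cnj_iff exp_cnj')

lemma hatM0_herm:
  assumes "p2 \<ge> 3" "\<forall>n m. d n m \<in> \<real>"
  shows "hatM0 d od p2 n i j = cnj (hatM0 d od p2 n j i)"
proof (cases "j = i")
  case True show ?thesis by (rule hhhatM00[OF assms]; insert assms  True; auto)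
next
  case F0: False
  show ?thesis
  proof (cases "i = j + 1")
  case True show ?thesis by (rule hhhatM01[OF assms]; insert assms F0 True; auto)
next
  case F1: False
  show ?thesis
  proof (cases "j = i + 1")
  case True show ?thesis by (rule hhhatM02[OF assms]; insert assms F0 F1 True; auto)
next
  case F2: False
  show ?thesis
  proof (cases "i = 1 \<and> j = p2")
  case True show ?thesis by (rule hhhatM03[OF assms]; insert assms F0 F1 F2 True; auto)
next
  case F3: False
  show ?thesis
  proof (cases "i = p2 \<and> j = 1")
  case True show ?thesis by (rule hhhatM04[OF assms]; insert assms F0 F1 F2 F3 True; auto)
next
  case F4: False
  show ?thesis
  by (rule hhhatM05[OF assms]; insert assms F0 F1 F2 F3 F4; auto)
qed
qed
qed
qed
qed

definition cb :: "nat \<Rightarrow> nat \<Rightarrow> nat \<Rightarrow> real \<Rightarrow> real" where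
  "cb p2 m m' w = (if (m = 1 \<or> m = p2) \<and> m' = ms p2 m then w else 0)"

definition Bnd :: "(int \<Rightarrow> int \<Rightarrow> complex) \<Rightarrow> (int \<Rightarrow> int \<Rightarrow> complex) \<Rightarrow>
    (int \<Rightarrow> int \<Rightarrow> complex) \<Rightarrow> nat \<Rightarrow> nat \<Rightarrow> nat \<Rightarrow> nat \<Rightarrow> nat \<Rightarrow> nat \<Rightarrow> real" where
  "Bnd a0 a1 b0 p1 p2 n m n' m' =
     (if n' = n then cb p2 m m' (cmod (b0 (int n) (int p2))) else 0)
   + (if 2 \<le> n \<and> n' = n - 1 then cb p2 m m' (cmod (a0 (int (n - 1)) (int p2))) else 0)
   + (if n + 1 \<le> p1 \<and> n' = n + 1 then cb p2 m m' (cmod (a0 (int n) (int p2))) else 0)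
   + (if n = 1 \<and> n' = p1 then rowb a1 a0 p2 p1 m m' else 0)
   + (if n = p1 \<and> n' = 1 then rowb a1 a0 p2 p1 m m' else 0)"

lemma cb_nn: "0 \<le> w \<Longrightarrow> 0 \<le> cb p2 m m' w"
  by (simp add: cb_def)

lemma rowb_nn: "0 \<le> rowb d od p2 n i j"
  by (simp add: rowb_def)

lemma entry_bound:
  assumes p1: "p1 \<ge> 3" and p2: "p2 \<ge> 3" and n: "n \<in> {1..p1}" and m: "m \<in> {1..p2}"
    and n': "n' \<in> {1..p1}" and m': "m' \<in> {1..p2}"
  shows "cmod (Jmat a0 a1 b0 b1 p1 p2 x y (n,m) (n',m') - J0mat a0 a1 b0 b1 p1 p2 (n,m) (n',m'))
     \<le> Bnd a0 a1 b0 p1 p2 n m n' m'"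
proof -
  let ?J = "Jmat a0 a1 b0 b1 p1 p2 x y (n,m) (n',m') - J0mat a0 a1 b0 b1 p1 p2 (n,m) (n',m')"
  define t1 where "t1 = (if n' = n then cb p2 m m' (cmod (b0 (int n) (int p2))) else 0)"
  define t2 where "t2 = (if 2 \<le> n \<and> n' = n - 1 then cb p2 m m' (cmod (a0 (int (n - 1)) (int p2))) else 0)"
  define t3 where "t3 = (if n + 1 \<le> p1 \<and> n' = n + 1 then cb p2 m m' (cmod (a0 (int n) (int p2))) else 0)"
  define t4 where "t4 = (if n = 1 \<and> n' = p1 then rowb a1 a0 p2 p1 m m' else 0)"
  define t5 where "t5 = (if n = p1 \<and> n' = 1 then rowb a1 a0 p2 p1 m m' else 0)"
  have B: "Bnd a0 a1 b0 p1 p2 n m n' m' = t1 + t2 + t3 + t4 + t5"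
    unfolding Bnd_def t1_def t2_def t3_def t4_def t5_def by simp
  have nn: "0 \<le> t1" "0 \<le> t2" "0 \<le> t3" "0 \<le> t4" "0 \<le> t5"
    unfolding t1_def t2_def t3_def t4_def t5_def by (simp_all add: cb_nn rowb_nn)
  consider (c1) "n' = n" | (c2) "n' \<noteq> n" "2 \<le> n" "n' = n - 1" | (c3) "n' \<noteq> n" "n + 1 \<le> p1" "n' = n + 1"
    | (c4) "n = 1" "n' = p1" | (c5) "n = p1" "n' = 1"
    | (c6) "n' \<noteq> n" "\<not> (2 \<le> n \<and> n' = n - 1)" "\<not> (n + 1 \<le> p1 \<and> n' = n + 1)"
           "\<not> (n = 1 \<and> n' = p1)" "\<not> (n = p1 \<and> n' = 1)"
    by blast
  then have "cmod ?J \<le> t1 + t2 + t3 + t4 + t5"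
  proof cases
    case c1
    have "?J = hatM b1 b0 p2 x n m m' - hatM0 b1 b0 p2 n m m'"
      using c1 by (simp add: Jmat_def J0mat_def)
    then have "cmod ?J \<le> cb p2 m m' (cmod (b0 (int n) (int p2)))"
      unfolding cb_def by (simp only:) (rule hatM_diff_bound[OF p2])
    moreover have "t1 = cb p2 m m' (cmod (b0 (int n) (int p2)))" using c1 unfolding t1_def by simp
    ultimately have "cmod ?J \<le> t1" by simp
    then show ?thesis using nn by linarith
  next
    case c2
    have e: "n = n' + 1" "1 \<le> n'" "n' \<le> p1 - 1" using c2 n by auto
    have "?J = hatM a1 a0 p2 x n' m m' - hatM0 a1 a0 p2 n' m m'"
      using c2(1) e by (simp add: Jmat_def J0mat_def)
    then have "cmod ?J \<le> cb p2 m m' (cmod (a0 (int n') (int p2)))"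
      unfolding cb_def by (simp only:) (rule hatM_diff_bound[OF p2])
    moreover have "t2 = cb p2 m m' (cmod (a0 (int n') (int p2)))" using c2 unfolding t2_def by simp
    ultimately have "cmod ?J \<le> t2" by simp
    then show ?thesis using nn by linarith
  next
    case c3
    have e: "n \<noteq> n' + 1" "1 \<le> n" "n \<le> p1 - 1" using c3 n by auto
    have "?J = cnj (hatM a1 a0 p2 x n m' m) - cnj (hatM0 a1 a0 p2 n m' m)"
      using c3 e by (simp add: Jmat_def J0mat_def)
    then have "cmod ?J \<le> cb p2 m m' (cmod (a0 (int n) (int p2)))"
      unfolding cb_def by (simp only:) (rule hatM_diff_bound_t[OF p2])
    moreover have "t3 = cb p2 m m' (cmod (a0 (int n) (int p2)))" using c3 unfolding t3_def by simp
    ultimately have "cmod ?J \<le> t3" by simp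
    then show ?thesis using nn by linarith
  next
    case c4
    have e: "n \<noteq> n'" "n \<noteq> n' + 1" "n' \<noteq> n + 1" using c4 p1 by auto
    have "?J = exp (\<i> * complex_of_real y) * hatM a1 a0 p2 x p1 m m'"
      using c4 e by (simp add: Jmat_def J0mat_def)
    then have "cmod ?J = cmod (hatM a1 a0 p2 x p1 m m')" by (simp add: norm_mult)
    also have "\<dots> \<le> t4" using hatM_bound[OF p2 m m', of a1 a0 x p1] c4 unfolding t4_def by simp
    finally show ?thesis using nn by linarith
  next
    case c5
    have e: "n \<noteq> n'" "n \<noteq> n' + 1" "n' \<noteq> n + 1" "\<not> (n = 1 \<and> n' = p1)" using c5 p1 by auto
    have "?J = exp (- \<i> * complex_of_real y) * cnj (hatM a1 a0 p2 x p1 m' m)"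
      using c5 e by (simp add: Jmat_def J0mat_def)
    then have "cmod ?J = cmod (hatM a1 a0 p2 x p1 m' m)" by (simp add: norm_mult)
    also have "\<dots> \<le> t5" using hatM_bound_t[OF p2 m m', of a1 a0 x p1] c5 unfolding t5_def by simp
    finally show ?thesis using nn by linarith
  next
    case c6
    have e: "n \<noteq> n'" "\<not> (n = n' + 1 \<and> 1 \<le> n' \<and> n' \<le> p1 - 1)" "\<not> (n' = n + 1 \<and> 1 \<le> n \<and> n \<le> p1 - 1)"
        "\<not> (n = 1 \<and> n' = p1)" "\<not> (n = p1 \<and> n' = 1)"
      using c6 n n' by auto
    have "?J = 0"
      using e unfolding Jmat_def J0mat_def by (simp only: prod.case if_False) simp
    then show ?thesis using nn by simp
  qed
  then show ?thesis using B by simp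
qed

lemma cb_sum:
  assumes p2: "p2 \<ge> 3" and w: "0 \<le> w"
  shows "(\<Sum>m'\<in>{1..p2}. cb p2 m m' w) \<le> (if m = 1 \<or> m = p2 then w else 0)"
proof (cases "m = 1 \<or> m = p2")
  case True
  have "(\<Sum>m'\<in>{1..p2}. cb p2 m m' w) = (\<Sum>m'\<in>{1..p2}. if m' = ms p2 m then w else 0)"
    using True unfolding cb_def by simp
  also have "\<dots> \<le> w" using w by (simp add: sum.delta')
  finally show ?thesis using True by simp
next
  case False then show ?thesis by (simp add: cb_def)
qed

lemma rowb_sum:
  assumes p2: "p2 \<ge> 3" and m: "m \<in> {1..p2}"
  shows "(\<Sum>m'\<in>{1..p2}. rowb d od p2 n m m') \<le>
     cmod (d (int n) (int m)) + cmod (od (int n) (int m)) + cmod (if m = 1 then od (int n) (int p2) else od (int n) (int (m - 1)))"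
proof -
  have "(\<Sum>m'\<in>{1..p2}. rowb d od p2 n m m') =
     (\<Sum>m'\<in>{1..p2}. if m' = m then cmod (d (int n) (int m)) else 0)
   + (\<Sum>m'\<in>{1..p2}. if m' = sc p2 m then cmod (od (int n) (int m)) else 0)
   + (\<Sum>m'\<in>{1..p2}. if m' = pc p2 m then cmod (if m = 1 then od (int n) (int p2) else od (int n) (int (m - 1))) else 0)"
    unfolding rowb_def by (simp add: sum.distrib)
  also have "\<dots> \<le> cmod (d (int n) (int m)) + cmod (od (int n) (int m)) + cmod (if m = 1 then od (int n) (int p2) else od (int n) (int (m - 1)))"
    by (intro add_mono) (simp_all add: sum.delta')
  finally show ?thesis .
qed


lemma sum_if_P: "(\<Sum>x\<in>S. if P then f x else 0) = (if P then sum f S else (0::real))"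
  by simp

lemma sum_if_eq: "finite S \<Longrightarrow> (\<Sum>k\<in>S. if P \<and> k = a then X else 0) = (if P \<and> a \<in> S then X else (0::real))"
  by (cases P) simp_all

lemma sum_if_eq1: "finite S \<Longrightarrow> (\<Sum>k\<in>S. if k = a then X else 0) = (if a \<in> S then X else (0::real))"
  by simp

lemma if_mono0: "(P \<Longrightarrow> (a::real) \<le> b) \<Longrightarrow> (if P then a else 0) \<le> (if P then b else 0)"
  by simp

lemma cdiag_eq:
  assumes p1: "p1 \<ge> 3" and n: "n \<in> {1..p1}" and m: "m \<in> {1..p2}"
  shows "cdiag a0 a1 b0 p1 p2 n m =
     (if m = 1 \<or> m = p2 then cmod (b0 (int n) (int p2)) + (if 2 \<le> n then cmod (a0 (int (n - 1)) (int p2)) else 0)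
        + (if n + 1 \<le> p1 then cmod (a0 (int n) (int p2)) else 0) else 0)
   + (if n = 1 \<or> n = p1 then cmod (a1 (int p1) (int m)) + cmod (a0 (int p1) (int m))
        + cmod (if m = 1 then a0 (int p1) (int p2) else a0 (int p1) (int (m - 1))) else 0)"
  using p1 n m unfolding cdiag_def Let_def
  by (cases "m = 1"; cases "n = 1"; cases "n = p1") (simp_all add: of_nat_diff)

lemma row_sum_bound:
  assumes p1: "p1 \<ge> 3" and p2: "p2 \<ge> 3" and n: "n \<in> {1..p1}" and m: "m \<in> {1..p2}"
  shows "(\<Sum>c\<in>idx p1 p2. Bnd a0 a1 b0 p1 p2 n m (fst c) (snd c)) \<le> cdiag a0 a1 b0 p1 p2 n m"
proof -
  let ?w1 = "cmod (b0 (int n) (int p2))"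
  let ?w2 = "cmod (a0 (int (n - 1)) (int p2))"
  let ?w3 = "cmod (a0 (int n) (int p2))"
  let ?R = "\<lambda>m'. rowb a1 a0 p2 p1 m m'"
  have "(\<Sum>c\<in>idx p1 p2. Bnd a0 a1 b0 p1 p2 n m (fst c) (snd c)) = (\<Sum>n'\<in>{1..p1}. \<Sum>m'\<in>{1..p2}. Bnd a0 a1 b0 p1 p2 n m n' m')"
    unfolding idx_def by (simp add: sum.cartesian_product case_prod_beta)
  also have "\<dots> = (\<Sum>n'\<in>{1..p1}. (if n' = n then (\<Sum>m'\<in>{1..p2}. cb p2 m m' ?w1) else 0)
        + (if 2 \<le> n \<and> n' = n - 1 then (\<Sum>m'\<in>{1..p2}. cb p2 m m' ?w2) else 0)
        + (if n + 1 \<le> p1 \<and> n' = n + 1 then (\<Sum>m'\<in>{1..p2}. cb p2 m m' ?w3) else 0)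
        + (if n = 1 \<and> n' = p1 then (\<Sum>m'\<in>{1..p2}. ?R m') else 0)
        + (if n = p1 \<and> n' = 1 then (\<Sum>m'\<in>{1..p2}. ?R m') else 0))"
    unfolding Bnd_def by (simp only: sum.distrib sum_if_P)
  also have "\<dots> = (\<Sum>m'\<in>{1..p2}. cb p2 m m' ?w1)
        + (if 2 \<le> n then (\<Sum>m'\<in>{1..p2}. cb p2 m m' ?w2) else 0)
        + (if n + 1 \<le> p1 then (\<Sum>m'\<in>{1..p2}. cb p2 m m' ?w3) else 0)
        + (if n = 1 then (\<Sum>m'\<in>{1..p2}. ?R m') else 0)
        + (if n = p1 then (\<Sum>m'\<in>{1..p2}. ?R m') else 0)"
  proof -
    have f: "finite {1..p1}" by simp
    have mem: "(n \<in> {1..p1}) = True" "(2 \<le> n \<and> n - 1 \<in> {1..p1}) = (2 \<le> n)"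
      "(n + 1 \<le> p1 \<and> n + 1 \<in> {1..p1}) = (n + 1 \<le> p1)"
      "(n = 1 \<and> p1 \<in> {1..p1}) = (n = 1)" "(n = p1 \<and> 1 \<in> {1..p1}) = (n = p1)"
      using n p1 by auto
    show ?thesis
      by (simp only: sum.distrib sum_if_eq[OF f] sum_if_eq1[OF f] mem if_True)
  qed
  also have "\<dots> \<le> (if m = 1 \<or> m = p2 then ?w1 else 0)
        + (if 2 \<le> n then (if m = 1 \<or> m = p2 then ?w2 else 0) else 0)
        + (if n + 1 \<le> p1 then (if m = 1 \<or> m = p2 then ?w3 else 0) else 0)
        + (if n = 1 then cmod (a1 (int p1) (int m)) + cmod (a0 (int p1) (int m)) + cmod (if m = 1 then a0 (int p1) (int p2) else a0 (int p1) (int (m - 1))) else 0)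
        + (if n = p1 then cmod (a1 (int p1) (int m)) + cmod (a0 (int p1) (int m)) + cmod (if m = 1 then a0 (int p1) (int p2) else a0 (int p1) (int (m - 1))) else 0)"
    by (intro add_mono if_mono0; (rule cb_sum[OF p2 norm_ge_zero] | rule rowb_sum[OF p2 m]))
  also have "\<dots> = cdiag a0 a1 b0 p1 p2 n m"
    unfolding cdiag_eq[OF p1 n m] using p1
    by (cases "m = 1 \<or> m = p2"; cases "n = 1"; cases "n = p1") simp_all
  finally show ?thesis .
qed


lemma Jmat_herm:
  assumes p1: "p1 \<ge> 3" and p2: "p2 \<ge> 3" and b1: "\<forall>n m. b1 n m \<in> \<real>"
  shows "Jmat a0 a1 b0 b1 p1 p2 x y (n, m) (n', m') = cnj (Jmat a0 a1 b0 b1 p1 p2 x y (n', m') (n, m))"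
proof -
  consider (c1) "n = n'" | (c2) "n \<noteq> n'" "n = n' + 1 \<and> 1 \<le> n' \<and> n' \<le> p1 - 1"
    | (c3) "n \<noteq> n'" "\<not> (n = n' + 1 \<and> 1 \<le> n' \<and> n' \<le> p1 - 1)" "n' = n + 1 \<and> 1 \<le> n \<and> n \<le> p1 - 1"
    | (c4) "n \<noteq> n'" "\<not> (n = n' + 1 \<and> 1 \<le> n' \<and> n' \<le> p1 - 1)" "\<not> (n' = n + 1 \<and> 1 \<le> n \<and> n \<le> p1 - 1)" "n = 1 \<and> n' = p1"
    | (c5) "n \<noteq> n'" "\<not> (n = n' + 1 \<and> 1 \<le> n' \<and> n' \<le> p1 - 1)" "\<not> (n' = n + 1 \<and> 1 \<le> n \<and> n \<le> p1 - 1)" "\<not> (n = 1 \<and> n' = p1)" "n = p1 \<and> n' = 1"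
    | (c6) "n \<noteq> n'" "\<not> (n = n' + 1 \<and> 1 \<le> n' \<and> n' \<le> p1 - 1)" "\<not> (n' = n + 1 \<and> 1 \<le> n \<and> n \<le> p1 - 1)" "\<not> (n = 1 \<and> n' = p1)" "\<not> (n = p1 \<and> n' = 1)"
    by argo
  then show ?thesis
  proof cases
    case c1 then show ?thesis using hatM_herm[OF p2 b1, of b0 x n' m m'] by (simp add: Jmat_def)
  next
    case c2
    have "n' \<noteq> n" "\<not> (n' = n + 1 \<and> 1 \<le> n \<and> n \<le> p1 - 1)" using c2 by auto
    then show ?thesis using c2 by (simp add: Jmat_def)
  next
    case c3
    have "n' \<noteq> n" "\<not> (n' = n + 1 \<and> 1 \<le> n \<and> n \<le> p1 - 1) \<or> True" using c3 by auto
    then show ?thesis using c3 by (simp add: Jmat_def)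
  next
    case c4
    have "n = 1" "n' = p1" using c4 by auto
    then show ?thesis using p1 by (simp add: Jmat_def exp_cnj')
  next
    case c5
    have "n = p1" "n' = 1" using c5 by auto
    then show ?thesis using p1 by (simp add: Jmat_def exp_cnj')
  next
    case c6
    have e: "(n = n') = False" "(n' = n) = False" "(n = n' + 1 \<and> 1 \<le> n' \<and> n' \<le> p1 - 1) = False"
      "(n' = n + 1 \<and> 1 \<le> n \<and> n \<le> p1 - 1) = False" "(n = 1 \<and> n' = p1) = False"
      "(n = p1 \<and> n' = 1) = False" "(n' = 1 \<and> n = p1) = False" "(n' = p1 \<and> n = 1) = False"
      using c6 by auto
    show ?thesis unfolding Jmat_def by (simp only: prod.case e if_False complex_cnj_zero)
  qed
qed

lemma J0mat_herm:
  assumes p1: "p1 \<ge> 3" and p2: "p2 \<ge> 3" and b1: "\<forall>n m. b1 n m \<in> \<real>"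
  shows "J0mat a0 a1 b0 b1 p1 p2 (n, m) (n', m') = cnj (J0mat a0 a1 b0 b1 p1 p2 (n', m') (n, m))"
proof -
  consider (c1) "n = n'" | (c2) "n \<noteq> n'" "n = n' + 1 \<and> 1 \<le> n' \<and> n' \<le> p1 - 1"
    | (c3) "n \<noteq> n'" "\<not> (n = n' + 1 \<and> 1 \<le> n' \<and> n' \<le> p1 - 1)" "n' = n + 1 \<and> 1 \<le> n \<and> n \<le> p1 - 1"
    | (c6) "n \<noteq> n'" "\<not> (n = n' + 1 \<and> 1 \<le> n' \<and> n' \<le> p1 - 1)" "\<not> (n' = n + 1 \<and> 1 \<le> n \<and> n \<le> p1 - 1)"
    by argo
  then show ?thesis
  proof cases
    case c1 then show ?thesis using hatM0_herm[OF p2 b1, of b0 n' m m'] by (simp add: J0mat_def)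
  next
    case c2
    have "n' \<noteq> n" "\<not> (n' = n + 1 \<and> 1 \<le> n \<and> n \<le> p1 - 1)" using c2 by auto
    then show ?thesis using c2 by (simp add: J0mat_def)
  next
    case c3
    have "n' \<noteq> n" using c3 by auto
    then show ?thesis using c3 by (simp add: J0mat_def)
  next
    case c6
    have e: "(n = n') = False" "(n' = n) = False" "(n = n' + 1 \<and> 1 \<le> n' \<and> n' \<le> p1 - 1) = False"
      "(n' = n + 1 \<and> 1 \<le> n \<and> n \<le> p1 - 1) = False"
      using c6 by auto
    show ?thesis unfolding J0mat_def by (simp only: prod.case e if_False complex_cnj_zero)
  qed
qed

theorem lemma3p1:
  fixes a0 a1 b0 b1 :: "int \<Rightarrow> int \<Rightarrow> complex" and p1 p2 :: nat and x y :: real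
  assumes "p1 \<ge> 3" and "p2 \<ge> 3"
    and "periodic2 p1 p2 a0" and "periodic2 p1 p2 a1"
    and "periodic2 p1 p2 b0" and "periodic2 p1 p2 b1"
    and "\<forall>n m. b1 n m \<in> \<real>"
    and "x \<in> {0..2*pi}" and "y \<in> {0..2*pi}"
  shows "loewner_le (idx p1 p2) (\<lambda>i j. - Cmat a0 a1 b0 p1 p2 i j)
           (\<lambda>i j. Jmat a0 a1 b0 b1 p1 p2 x y i j - J0mat a0 a1 b0 b1 p1 p2 i j)
       \<and> loewner_le (idx p1 p2)
           (\<lambda>i j. Jmat a0 a1 b0 b1 p1 p2 x y i j - J0mat a0 a1 b0 b1 p1 p2 i j)
           (Cmat a0 a1 b0 p1 p2)"
proof -
  let ?I = "idx p1 p2"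
  let ?J1 = "\<lambda>i j. Jmat a0 a1 b0 b1 p1 p2 x y i j - J0mat a0 a1 b0 b1 p1 p2 i j"
  let ?C = "Cmat a0 a1 b0 p1 p2"
  let ?c = "\<lambda>i. cdiag a0 a1 b0 p1 p2 (fst i) (snd i)"
  have p1: "p1 \<ge> 3" and p2: "p2 \<ge> 3" using assms by auto
  have fin: "finite ?I" unfolding idx_def by simp
  have Ceq: "?C i j = (if i = j then complex_of_real (?c i) else 0)" for i j
    unfolding Cmat_def by (cases i; cases j) auto
  have herm: "hermitian_on ?I ?J1"
    unfolding hermitian_on_def
  proof (intro ballI)
    fix i j assume i: "i \<in> ?I" and j: "j \<in> ?I"
    obtain n m where [simp]: "i = (n, m)" by (cases i)
    obtain n' m' where [simp]: "j = (n', m')" by (cases j)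
    have "Jmat a0 a1 b0 b1 p1 p2 x y (n, m) (n', m') = cnj (Jmat a0 a1 b0 b1 p1 p2 x y (n', m') (n, m))"
      by (rule Jmat_herm[OF p1 p2 assms(7)])
    moreover have "J0mat a0 a1 b0 b1 p1 p2 (n, m) (n', m') = cnj (J0mat a0 a1 b0 b1 p1 p2 (n', m') (n, m))"
      by (rule J0mat_herm[OF p1 p2 assms(7)])
    ultimately show "?J1 i j = cnj (?J1 j i)" by simp
  qed
  have rows: "\<forall>i\<in>?I. (\<Sum>j\<in>?I. cmod (?J1 i j)) \<le> ?c i"
  proof
    fix i assume i: "i \<in> ?I"
    obtain n m where i': "i = (n, m)" by (cases i)
    have n: "n \<in> {1..p1}" and m: "m \<in> {1..p2}" using i i' unfolding idx_def by auto
    have "(\<Sum>j\<in>?I. cmod (?J1 i j)) \<le> (\<Sum>j\<in>?I. Bnd a0 a1 b0 p1 p2 n m (fst j) (snd j))"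
    proof (rule sum_mono)
      fix j assume j: "j \<in> ?I"
      obtain n' m' where j': "j = (n', m')" by (cases j)
      have n': "n' \<in> {1..p1}" and m': "m' \<in> {1..p2}" using j j' unfolding idx_def by auto
      show "cmod (?J1 i j) \<le> Bnd a0 a1 b0 p1 p2 n m (fst j) (snd j)"
        using entry_bound[OF p1 p2 n m n' m', of a0 a1 b0 b1 x y] i' j' by simp
    qed
    also have "\<dots> \<le> ?c i" using row_sum_bound[OF p1 p2 n m, of a0 a1 b0] i' by simp
    finally show "(\<Sum>j\<in>?I. cmod (?J1 i j)) \<le> ?c i" .
  qed
  have hermm: "hermitian_on ?I (\<lambda>i j. - ?J1 i j)"
    unfolding hermitian_on_def
  proof (intro ballI)
    fix i j assume "i \<in> ?I" "j \<in> ?I"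
    then have "?J1 i j = cnj (?J1 j i)" using herm unfolding hermitian_on_def by blast
    then show "- ?J1 i j = cnj (- ?J1 j i)" by simp
  qed
  have rowsm: "\<forall>i\<in>?I. (\<Sum>j\<in>?I. cmod (- ?J1 i j)) \<le> ?c i"
    using rows by (simp only: norm_minus_cancel)
  have A: "psd_on ?I (\<lambda>i j. (if i = j then complex_of_real (?c i) else 0) + ?J1 i j)"
    by (rule psd_diag_dom[OF fin herm rows])
  have B: "psd_on ?I (\<lambda>i j. (if i = j then complex_of_real (?c i) else 0) + - ?J1 i j)"
    by (rule psd_diag_dom[OF fin hermm rowsm])
  have eA: "(\<lambda>i j. ?J1 i j - - ?C i j) = (\<lambda>i j. (if i = j then complex_of_real (?c i) else 0) + ?J1 i j)"
    by (intro ext) (simp only: Ceq, simp)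
  have eB: "(\<lambda>i j. ?C i j - ?J1 i j) = (\<lambda>i j. (if i = j then complex_of_real (?c i) else 0) + - ?J1 i j)"
    by (intro ext) (simp only: Ceq, simp)
  show ?thesis
    unfolding loewner_le_def using A B eA eB by simp
qed

end
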